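(* Let $f:\mathbb R\to\mathbb C$ be such that $f$ and its derivative $f'$ are integrable, and for $y_o\in\mathbb R$ let $f_{y_o}(y)=f(y-y_o)$. Then for every $y_o\in\mathbb R$ and every $k>0$, \[ \left|\int_{\mathbb R} f_{y_o}(y)\Big(e^{ikx(y)}-e^{-ike^{-y}}\Big)dy\right|\le\Big(\frac{1}{\sqrt k}+\frac1k\Big)\big(\|f\|_{L^1}+\|f'\|_{L^1}\big),\] where $x(y)=-\log(1+e^{-y})$.
   Context: The left-hand side equals $\sqrt{2\pi}\,|\widetilde{\delta\check f}_{y_o}(-k)|$, where $\delta\check f=\check f-\check f^{Th}$ is the difference of the incoming functions obtained from $f_{y_o}$ via the CGHS map $x(y)=-\log(1+e^{-y})$ and the thermal map $x_{Th}(y)=-e^{-y}$ (namely $\check f(x)=f(y(x))/x'(y(x))$ for $x<0$), and Fourier transforms are $\tilde g(k)=(2\pi)^{-1/2}\int g(x)e^{-ikx}dx$. *)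

theory Defs
  imports "HOL-Analysis.Analysis"
begin

definition cghs_x :: "real \<Rightarrow> real" where
  "cghs_x y = - ln (1 + exp (- y))"

definition thermal_x :: "real \<Rightarrow> real" where
  "thermal_x y = - exp (- y)"

end

theory Submission
  imports Defs
begin


lemma ftc_Icc_lebesgue:
  fixes F F' :: "real \<Rightarrow> complex"
  assumes der: "\<And>x. (F has_vector_derivative F' x) (at x)"
    and intF': "integrable lborel F'" and ab: "a \<le> b"
  shows "(LINT x:{a..b}|lborel. F' x) = F b - F a"
proof -
  have si: "set_integrable lborel {a..b} F'"
    unfolding set_integrable_def using intF' by (intro integrable_mult_indicator) auto
  have "(F' has_integral (F b - F a)) {a..b}"
    using ab der by (intro fundamental_theorem_of_calculus) (auto intro: has_vector_derivative_at_within)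
  then show ?thesis using set_borel_integral_eq_integral(2)[OF si] by (simp add: integral_unique)
qed

lemma tendsto_zero_at_top_of_integrable:
  fixes F F' :: "real \<Rightarrow> complex"
  assumes der: "\<And>x. (F has_vector_derivative F' x) (at x)"
    and intF': "integrable lborel F'" and intF: "integrable lborel F"
  shows "(F \<longlongrightarrow> 0) at_top"
proof -
  define L where "L = F 0 + (LINT x:{0..}|lborel. F' x)"
  have si: "set_integrable lborel {0..} F'"
    unfolding set_integrable_def using intF' by (intro integrable_mult_indicator) auto
  have "((\<lambda>b. LINT x:{0..b}|lborel. F' x) \<longlongrightarrow> (LINT x:{0..}|lborel. F' x)) at_top"
    by (intro tendsto_set_lebesgue_integral_at_top si) auto
  then have "((\<lambda>b. F 0 + (LINT x:{0..b}|lborel. F' x)) \<longlongrightarrow> L) at_top"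
    unfolding L_def by (intro tendsto_add tendsto_const)
  moreover have "eventually (\<lambda>b. F 0 + (LINT x:{0..b}|lborel. F' x) = F b) at_top"
    using eventually_ge_at_top[of "0::real"]
    by eventually_elim (simp add: ftc_Icc_lebesgue[OF der intF'])
  ultimately have lim: "(F \<longlongrightarrow> L) at_top" by (rule Lim_transform_eventually)
  have "L = 0"
  proof (rule ccontr)
    assume "L \<noteq> 0"
    then have c: "norm L / 2 < norm L" "norm L > 0" by auto
    have "((\<lambda>x. norm (F x)) \<longlongrightarrow> norm L) at_top" using lim by (rule tendsto_norm)
    from order_tendstoD(1)[OF this c(1)] obtain M where M: "\<And>x. x \<ge> M \<Longrightarrow> norm (F x) > norm L / 2"
      by (auto simp: eventually_at_top_linorder)
    define N where "N = 2 * (LINT x|lborel. norm (F x)) / norm L + 1"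
    have I0: "0 \<le> (LINT x|lborel. norm (F x))" by (rule integral_nonneg_AE) auto
    have N0: "N > 0" unfolding N_def using c I0 by (simp add: add_nonneg_pos)
    have "(LINT x|lborel. indicator {M..M+N} x * (norm L / 2)) \<le> (LINT x|lborel. norm (F x))"
    proof (rule integral_mono)
      show "integrable lborel (\<lambda>x. indicator {M..M + N} x * (norm L / 2))"
        using N0 by (intro integrable_mult_left) auto
      show "integrable lborel (\<lambda>x. norm (F x))" using intF by auto
      fix x show "indicator {M..M + N} x * (norm L / 2) \<le> norm (F x)"
        using M[of x] by (auto split: split_indicator)
    qed
    moreover have "(LINT x|lborel. indicator {M..M+N} x * (norm L / 2)) = N * (norm L / 2)"
      using N0 by (simp add: measure_def)
    ultimately have "N * (norm L / 2) \<le> (LINT x|lborel. norm (F x))" using N0 by simp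
    then show False unfolding N_def using c by (simp add: field_simps)
  qed
  with lim show ?thesis by simp
qed

lemma integral_deriv_zero:
  fixes F F' :: "real \<Rightarrow> complex"
  assumes der: "\<And>x. (F has_vector_derivative F' x) (at x)"
    and intF': "integrable lborel F'" and intF: "integrable lborel F"
  shows "(LINT x|lborel. F' x) = 0"
proof -
  have top: "(F \<longlongrightarrow> 0) at_top" by (rule tendsto_zero_at_top_of_integrable[OF der intF' intF])
  have derm: "((\<lambda>x. F (-x)) has_vector_derivative - F' (-x)) (at x)" for x
  proof -
    have "((F \<circ> uminus) has_vector_derivative (-1) *\<^sub>R F' (-x)) (at x)"
      by (intro vector_diff_chain_at der) (auto intro!: derivative_eq_intros)
    then show ?thesis by (simp add: o_def)
  qed
  have i1: "integrable lborel (\<lambda>x. - F' (-x))"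
    using lborel_integrable_real_affine[OF intF', of "-1" 0] by simp
  have i2: "integrable lborel (\<lambda>x. F (-x))"
    using lborel_integrable_real_affine[OF intF, of "-1" 0] by simp
  have "((\<lambda>x. F (-x)) \<longlongrightarrow> 0) at_top"
    by (rule tendsto_zero_at_top_of_integrable[OF derm i1 i2])
  then have bot: "(F \<longlongrightarrow> 0) at_bot" by (simp add: filterlim_at_bot_mirror)
  have "(\<lambda>n::nat. F (real n)) \<longlonglongrightarrow> 0"
    using top filterlim_real_sequentially by (rule filterlim_compose)
  moreover have "(\<lambda>n::nat. F (- real n)) \<longlonglongrightarrow> 0"
  proof -
    have "filterlim (\<lambda>n::nat. - real n) at_bot sequentially"
      using filterlim_real_sequentially by (simp add: filterlim_uminus_at_bot)
    with bot show ?thesis by (rule filterlim_compose)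
  qed
  ultimately have l1: "(\<lambda>n::nat. F (real n) - F (- real n)) \<longlonglongrightarrow> 0"
    using tendsto_diff by fastforce
  have l2: "(\<lambda>n::nat. LINT x|lborel. indicator {- real n..real n} x *\<^sub>R F' x) \<longlonglongrightarrow> (LINT x|lborel. F' x)"
  proof (rule integral_dominated_convergence[where w="\<lambda>x. norm (F' x)"])
    show "integrable lborel (\<lambda>x. norm (F' x))" using intF' by auto
    show "F' \<in> borel_measurable lborel" using intF' by auto
    show "(\<lambda>x. indicator {- real n..real n} x *\<^sub>R F' x) \<in> borel_measurable lborel" for n
      using intF' by (intro borel_measurable_integrable integrable_mult_indicator) auto
    show "AE x in lborel. norm (indicator {- real n..real n} x *\<^sub>R F' x) \<le> norm (F' x)" for n
      by (auto split: split_indicator)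
    show "AE x in lborel. (\<lambda>n. indicator {- real n..real n} x *\<^sub>R F' x) \<longlonglongrightarrow> F' x"
    proof (rule AE_I2, rule tendsto_eventually)
      fix x :: real
      obtain m :: nat where "\<bar>x\<bar> \<le> real m" using real_arch_simple by blast
      then show "eventually (\<lambda>n. indicator {- real n..real n} x *\<^sub>R F' x = F' x) sequentially"
        unfolding eventually_sequentially
        by (intro exI[of _ m]) (auto split: split_indicator)
    qed
  qed
  have "(LINT x|lborel. indicator {- real n..real n} x *\<^sub>R F' x) = F (real n) - F (- real n)" for n
    using ftc_Icc_lebesgue[OF der intF', of "- real n" "real n"] by (simp add: set_lebesgue_integral_def)
  with l2 l1 show ?thesis using LIMSEQ_unique by fastforce
qed



lemma cghs_deriv: "(cghs_x has_real_derivative 1 / (1 + exp y)) (at y)"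
proof -
  have "((\<lambda>y. - ln (1 + exp (- y))) has_real_derivative - (1 / (1 + exp (-y)) * (- exp (-y)))) (at y)"
    by (auto intro!: derivative_eq_intros simp: add_pos_pos)
  moreover have "- (1 / (1 + exp (-y)) * (- exp (-y))) = 1 / (1 + exp y)"
    by (simp add: exp_minus field_simps add_pos_pos)
  ultimately show ?thesis by (simp add: cghs_x_def[abs_def])
qed

lemma thermal_deriv: "(thermal_x has_real_derivative exp (- y)) (at y)"
  unfolding thermal_x_def[abs_def] by (auto intro!: derivative_eq_intros)

lemma phase_deriv:
  assumes "(\<theta> has_real_derivative d) (at y)"
  shows "((\<lambda>y. exp (\<i> * complex_of_real (k * \<theta> y))) has_vector_derivative
           (\<i> * complex_of_real (k * d)) * exp (\<i> * complex_of_real (k * \<theta> y))) (at y)"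
proof -
  have g: "((\<lambda>r. exp (\<i> * complex_of_real r)) has_vector_derivative \<i> * exp (\<i> * complex_of_real r)) (at r)" for r
  proof -
    have "((\<lambda>z. exp (\<i> * z)) has_field_derivative \<i> * exp (\<i> * complex_of_real r)) (at (complex_of_real r))"
      by (auto intro!: derivative_eq_intros)
    then show ?thesis by (rule has_vector_derivative_real_field)
  qed
  have f: "((\<lambda>y. k * \<theta> y) has_vector_derivative k * d) (at y)"
    using assms by (auto intro!: derivative_eq_intros simp: has_real_derivative_iff_has_vector_derivative[symmetric])
  have "(((\<lambda>r. exp (\<i> * complex_of_real r)) \<circ> (\<lambda>y. k * \<theta> y)) has_vector_derivative (k * d) *\<^sub>R (\<i> * exp (\<i> * complex_of_real (k * \<theta> y)))) (at y)"
    by (rule vector_diff_chain_at[OF f g])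
  then show ?thesis by (simp add: o_def scaleR_conv_of_real ac_simps)
qed

lemma ln1p_lower:
  fixes s :: real assumes "0 \<le> s" shows "s - s\<^sup>2 / 2 \<le> ln (1 + s)"
proof -
  have "(\<lambda>x. ln (1 + x) - x + x\<^sup>2 / 2) 0 \<le> (\<lambda>x. ln (1 + x) - x + x\<^sup>2 / 2) s"
  proof (rule DERIV_nonneg_imp_nondecreasing[OF assms])
    fix x :: real assume x: "0 \<le> x" "x \<le> s"
    have "((\<lambda>x. ln (1 + x) - x + x\<^sup>2 / 2) has_real_derivative (1 / (1 + x) - 1 + x)) (at x)"
      using x by (auto intro!: derivative_eq_intros)
    moreover have "1 / (1 + x) - 1 + x = x\<^sup>2 / (1 + x)"
      using x by (simp add: field_simps power2_eq_square)
    moreover have "x\<^sup>2 / (1 + x) \<ge> 0" using x by simp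
    ultimately show "\<exists>y. ((\<lambda>x. ln (1 + x) - x + x\<^sup>2 / 2) has_real_derivative y) (at x) \<and> 0 \<le> y"
      by auto
  qed
  then show ?thesis by simp
qed

lemma norm_exp_i_minus_one: "norm (exp (\<i> * complex_of_real t) - 1) \<le> min 2 \<bar>t\<bar>"
proof -
  have "norm (exp (\<i> * complex_of_real t) - 1) = 2 * \<bar>sin (t / 2)\<bar>" by (rule dist_exp_i_1)
  moreover have "\<bar>sin (t / 2)\<bar> \<le> 1" by simp
  moreover have "\<bar>sin (t / 2)\<bar> \<le> \<bar>t / 2\<bar>" by (rule abs_sin_x_le_abs_x)
  ultimately show ?thesis by simp
qed

lemma E_bound:
  fixes k y :: real assumes k: "k > 0"
  shows "norm (complex_of_real (exp y) * (exp (\<i> * complex_of_real (k * cghs_x y)) - exp (\<i> * complex_of_real (k * thermal_x y)))) \<le> sqrt k"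
proof -
  define s where "s = exp (- y)"
  have s0: "s > 0" unfolding s_def by simp
  define \<delta> where "\<delta> = cghs_x y - thermal_x y"
  have \<delta>: "\<delta> = s - ln (1 + s)" unfolding \<delta>_def cghs_x_def thermal_x_def s_def by simp
  have d0: "0 \<le> \<delta>" using ln_add_one_self_le_self[of s] s0 \<delta> by simp
  have d1: "\<delta> \<le> s\<^sup>2 / 2" using ln1p_lower[of s] s0 \<delta> by simp
  have "exp (\<i> * complex_of_real (k * cghs_x y)) = exp (\<i> * complex_of_real (k * \<delta>)) * exp (\<i> * complex_of_real (k * thermal_x y))"
  proof -
    have "\<i> * complex_of_real (k * cghs_x y) = \<i> * complex_of_real (k * \<delta>) + \<i> * complex_of_real (k * thermal_x y)"
      unfolding \<delta>_def by (simp add: algebra_simps)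
    then show ?thesis by (simp only: exp_add)
  qed
  then have "exp (\<i> * complex_of_real (k * cghs_x y)) - exp (\<i> * complex_of_real (k * thermal_x y)) = (exp (\<i> * complex_of_real (k * \<delta>)) - 1) * exp (\<i> * complex_of_real (k * thermal_x y))"
    by (simp add: algebra_simps)
  then have "norm (complex_of_real (exp y) * (exp (\<i> * complex_of_real (k * cghs_x y)) - exp (\<i> * complex_of_real (k * thermal_x y)))) = exp y * norm (exp (\<i> * complex_of_real (k * \<delta>)) - 1)"
    by (simp add: norm_mult)
  also have "\<dots> = norm (exp (\<i> * complex_of_real (k * \<delta>)) - 1) / s"
    unfolding s_def by (simp add: exp_minus divide_inverse mult.commute)
  also have "\<dots> \<le> sqrt k"
  proof -
    define r where "r = sqrt k"
    have r0: "r > 0" using k by (simp add: r_def)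
    have kr: "k = r * r" using k by (simp add: r_def)
    have n: "norm (exp (\<i> * complex_of_real (k * \<delta>)) - 1) \<le> min 2 \<bar>k * \<delta>\<bar>" by (rule norm_exp_i_minus_one)
    show ?thesis
    proof (cases "2 \<le> r * s")
      case True
      have "norm (exp (\<i> * complex_of_real (k * \<delta>)) - 1) \<le> 2" using n by simp
      also have "2 \<le> r * s" by fact
      finally show ?thesis using s0 by (simp add: r_def[symmetric] divide_le_eq mult.commute)
    next
      case False
      have "norm (exp (\<i> * complex_of_real (k * \<delta>)) - 1) \<le> k * \<delta>" using n k d0 by simp
      also have "\<dots> \<le> k * (s\<^sup>2 / 2)" using d1 k by simp
      also have "\<dots> \<le> r * s" 
      proof -
        have "r * s * s \<le> 2 * s" using False s0 by (intro mult_right_mono) auto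
        then have "r * (r * s * s) \<le> r * (2 * s)" using r0 by (intro mult_left_mono) auto
        then have "k * s\<^sup>2 \<le> 2 * (r * s)" unfolding kr power2_eq_square
          by (simp add: algebra_simps)
        then show ?thesis by simp
      qed
      finally show ?thesis using s0 by (simp add: r_def[symmetric] divide_le_eq mult.commute)
    qed
  qed
  finally show ?thesis .
qed



lemma integrable_mult_bounded:
  fixes h m :: "real \<Rightarrow> complex"
  assumes h: "integrable lborel h" and m: "m \<in> borel_measurable borel" and b: "\<And>x. norm (m x) \<le> C"
  shows "integrable lborel (\<lambda>x. h x * m x)"
proof (rule Bochner_Integration.integrable_bound[where f="\<lambda>x. C * norm (h x)"])
  show "integrable lborel (\<lambda>x. C * norm (h x))" using h by auto
  show "(\<lambda>x. h x * m x) \<in> borel_measurable lborel" using h m by (auto intro!: borel_measurable_times)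
  have C: "0 \<le> C" using b[of 0] norm_ge_zero order_trans by blast
  show "AE x in lborel. norm (h x * m x) \<le> norm (C * norm (h x))"
  proof (rule AE_I2)
    fix x
    have "norm (h x) * norm (m x) \<le> norm (h x) * C" by (rule mult_left_mono[OF b]) simp
    then show "norm (h x * m x) \<le> norm (C * norm (h x))" using C by (simp add: norm_mult mult.commute)
  qed
qed

theorem lemma5:
  fixes f f' :: "real \<Rightarrow> complex" and y\<^sub>o k :: real
  assumes deriv: "\<And>y. (f has_vector_derivative f' y) (at y)"
    and int_f: "integrable lborel f"
    and int_f': "integrable lborel f'"
    and k_pos: "k > 0"
  shows "norm (LINT y|lborel. f (y - y\<^sub>o) *
            (exp (\<i> * complex_of_real (k * cghs_x y)) - exp (\<i> * complex_of_real (k * thermal_x y))))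
         \<le> (1 / sqrt k + 1 / k) * ((LINT y|lborel. norm (f y)) + (LINT y|lborel. norm (f' y)))"
proof -
  define g where "g y = f (y - y\<^sub>o)" for y
  define g' where "g' y = f' (y - y\<^sub>o)" for y
  define c where "c y = exp (\<i> * complex_of_real (k * cghs_x y))" for y
  define t where "t y = exp (\<i> * complex_of_real (k * thermal_x y))" for y
  define E where "E y = complex_of_real (exp y) * (c y - t y)" for y
  define P where "P y = g y * (complex_of_real (1 + exp y) * c y - complex_of_real (exp y) * t y)" for y
  define P' where "P' y = g' y * c y + (g' y + g y) * E y + \<i> * complex_of_real k * (g y * (c y - t y))" for y
  define A where "A = (LINT y|lborel. norm (f y))"
  define B where "B = (LINT y|lborel. norm (f' y))"
  have dg: "(g has_vector_derivative g' y) (at y)" for y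
  proof -
    have "((f \<circ> (\<lambda>y. y - y\<^sub>o)) has_vector_derivative 1 *\<^sub>R f' (y - y\<^sub>o)) (at y)"
      by (intro vector_diff_chain_at deriv) (auto intro!: derivative_eq_intros)
    then show ?thesis by (simp add: o_def g_def[abs_def] g'_def)
  qed
  have ig: "integrable lborel g"
    using lborel_integrable_real_affine[OF int_f, of 1 "-y\<^sub>o"] by (simp add: g_def[abs_def])
  have ig': "integrable lborel g'"
    using lborel_integrable_real_affine[OF int_f', of 1 "-y\<^sub>o"] by (simp add: g'_def[abs_def])
  have nA: "(LINT y|lborel. norm (g y)) = A"
    using lborel_integral_real_affine[of 1 "\<lambda>x. norm (f x)" "-y\<^sub>o"] by (simp add: g_def A_def)
  have nB: "(LINT y|lborel. norm (g' y)) = B"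
    using lborel_integral_real_affine[of 1 "\<lambda>x. norm (f' x)" "-y\<^sub>o"] by (simp add: g'_def B_def)
  have dc: "(c has_vector_derivative (\<i> * complex_of_real (k * (1 / (1 + exp y)))) * c y) (at y)" for y
    unfolding c_def[abs_def] by (rule phase_deriv[OF cghs_deriv])
  have dt: "(t has_vector_derivative (\<i> * complex_of_real (k * exp (- y))) * t y) (at y)" for y
    unfolding t_def[abs_def] by (rule phase_deriv[OF thermal_deriv])
  have dP: "(P has_vector_derivative P' y) (at y)" for y
  proof -
    have e1: "complex_of_real (1 + exp y) * (\<i> * complex_of_real (k * (1 / (1 + exp y)))) = \<i> * complex_of_real k"
    proof -
      have "1 + exp y \<noteq> 0" using exp_gt_zero[of y] by linarith
      then have "(1 + exp y) * (k * (1 / (1 + exp y))) = k" by simp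
      then have "complex_of_real (1 + exp y) * complex_of_real (k * (1 / (1 + exp y))) = complex_of_real k"
        by (metis of_real_mult)
      then show ?thesis by (metis mult.left_commute)
    qed
    have e2: "complex_of_real (exp y) * (\<i> * complex_of_real (k * exp (- y))) = \<i> * complex_of_real k"
    proof -
      have "exp y * (k * exp (- y)) = k" by (simp add: exp_minus)
      then have "complex_of_real (exp y) * complex_of_real (k * exp (- y)) = complex_of_real k"
        by (metis of_real_mult)
      then show ?thesis by (metis mult.left_commute)
    qed
    have dexp: "((\<lambda>y. complex_of_real (exp y)) has_vector_derivative complex_of_real (exp y)) (at y)"
      by (auto intro!: derivative_eq_intros)
    have d1p: "((\<lambda>y. complex_of_real (1 + exp y)) has_vector_derivative complex_of_real (exp y)) (at y)"
      by (auto intro!: derivative_eq_intros)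
    have dQ: "((\<lambda>y. complex_of_real (1 + exp y) * c y - complex_of_real (exp y) * t y) has_vector_derivative
       (complex_of_real (1 + exp y) * ((\<i> * complex_of_real (k * (1 / (1 + exp y)))) * c y) + complex_of_real (exp y) * c y)
       - (complex_of_real (exp y) * ((\<i> * complex_of_real (k * exp (- y))) * t y) + complex_of_real (exp y) * t y)) (at y)"
      by (intro has_vector_derivative_diff has_vector_derivative_mult d1p dexp dc dt)
    have "(P has_vector_derivative (g y * ((complex_of_real (1 + exp y) * ((\<i> * complex_of_real (k * (1 / (1 + exp y)))) * c y) + complex_of_real (exp y) * c y)
       - (complex_of_real (exp y) * ((\<i> * complex_of_real (k * exp (- y))) * t y) + complex_of_real (exp y) * t y))
       + g' y * (complex_of_real (1 + exp y) * c y - complex_of_real (exp y) * t y))) (at y)"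
      unfolding P_def[abs_def] by (rule has_vector_derivative_mult[OF dg dQ])
    moreover have "g y * ((complex_of_real (1 + exp y) * ((\<i> * complex_of_real (k * (1 / (1 + exp y)))) * c y) + complex_of_real (exp y) * c y)
       - (complex_of_real (exp y) * ((\<i> * complex_of_real (k * exp (- y))) * t y) + complex_of_real (exp y) * t y))
       + g' y * (complex_of_real (1 + exp y) * c y - complex_of_real (exp y) * t y) = P' y"
    proof -
      have X: "complex_of_real (1 + exp y) * ((\<i> * complex_of_real (k * (1 / (1 + exp y)))) * c y) = \<i> * complex_of_real k * c y"
        using e1 by (metis mult.assoc)
      have Y: "complex_of_real (exp y) * ((\<i> * complex_of_real (k * exp (- y))) * t y) = \<i> * complex_of_real k * t y"
        using e2 by (metis mult.assoc)
      show ?thesis unfolding X Y P'_def E_def by (simp add: algebra_simps)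
    qed
    ultimately show ?thesis by simp
  qed
  have cc: "continuous_on UNIV c" using dc by (intro continuous_on_vector_derivative) (auto intro: has_vector_derivative_at_within)
  have ct: "continuous_on UNIV t" using dt by (intro continuous_on_vector_derivative) (auto intro: has_vector_derivative_at_within)
  have mc: "c \<in> borel_measurable borel" using cc by (rule borel_measurable_continuous_onI)
  have mt: "t \<in> borel_measurable borel" using ct by (rule borel_measurable_continuous_onI)
  have mE: "E \<in> borel_measurable borel" unfolding E_def[abs_def] using mc mt by measurable
  have nc: "norm (c y) = 1" for y unfolding c_def by simp
  have nt: "norm (t y) = 1" for y unfolding t_def by simp
  have nd: "norm (c y - t y) \<le> 2" for y using norm_triangle_ineq4[of "c y" "t y"] nc nt by simp
  have nE: "norm (E y) \<le> sqrt k" for y unfolding E_def c_def t_def by (rule E_bound[OF k_pos])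
  have nQ: "norm (E y + c y) \<le> sqrt k + 1" for y using norm_triangle_ineq[of "E y" "c y"] nE[of y] nc[of y] by simp
  have i1: "integrable lborel (\<lambda>y. g y * (c y - t y))"
    using mc mt by (intro integrable_mult_bounded[OF ig _ nd]) measurable
  have i2: "integrable lborel (\<lambda>y. g' y * c y)"
    using mc by (intro integrable_mult_bounded[OF ig' _ ]) (auto simp: nc)
  have i3: "integrable lborel (\<lambda>y. (g' y + g y) * E y)"
    using mE by (intro integrable_mult_bounded[OF _ _ nE] Bochner_Integration.integrable_add ig ig')
  have iP': "integrable lborel P'"
    unfolding P'_def[abs_def] using i1 i2 i3 by (intro Bochner_Integration.integrable_add Bochner_Integration.integrable_mult_right)
  have "P = (\<lambda>y. g y * (E y + c y))"
    unfolding P_def[abs_def] E_def[abs_def] by (auto simp: algebra_simps)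
  then have iP: "integrable lborel P"
    using mc mE by (simp, intro integrable_mult_bounded[OF ig _ nQ]) measurable
  have "(LINT y|lborel. P' y) = 0" by (rule integral_deriv_zero[OF dP iP' iP])
  then have "(LINT y|lborel. g' y * c y) + (LINT y|lborel. (g' y + g y) * E y)
      + \<i> * complex_of_real k * (LINT y|lborel. g y * (c y - t y)) = 0"
    unfolding P'_def using i1 i2 i3 by (simp add: Bochner_Integration.integral_add Bochner_Integration.integrable_add)
  then have key: "\<i> * complex_of_real k * (LINT y|lborel. g y * (c y - t y))
      = - ((LINT y|lborel. g' y * c y) + (LINT y|lborel. (g' y + g y) * E y))"
    by (simp add: algebra_simps eq_neg_iff_add_eq_0)
  define I where "I = (LINT y|lborel. g y * (c y - t y))"
  have "k * norm I = norm (\<i> * complex_of_real k * I)" using k_pos by (simp add: norm_mult)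
  also have "\<dots> \<le> norm (LINT y|lborel. g' y * c y) + norm (LINT y|lborel. (g' y + g y) * E y)"
    unfolding key[folded I_def] norm_minus_cancel by (rule norm_triangle_ineq)
  also have "\<dots> \<le> (LINT y|lborel. norm (g' y)) + (LINT y|lborel. sqrt k * (norm (g' y) + norm (g y)))"
  proof (rule add_mono)
    have "norm (LINT y|lborel. g' y * c y) \<le> (LINT y|lborel. norm (g' y * c y))" by (rule integral_norm_bound)
    also have "\<dots> = (LINT y|lborel. norm (g' y))" by (simp add: norm_mult nc)
    finally show "norm (LINT y|lborel. g' y * c y) \<le> (LINT y|lborel. norm (g' y))" .
    have "norm (LINT y|lborel. (g' y + g y) * E y) \<le> (LINT y|lborel. norm ((g' y + g y) * E y))" by (rule integral_norm_bound)
    also have "\<dots> \<le> (LINT y|lborel. sqrt k * (norm (g' y) + norm (g y)))"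
    proof (rule integral_mono)
      show "integrable lborel (\<lambda>y. norm ((g' y + g y) * E y))" using i3 by auto
      show "integrable lborel (\<lambda>y. sqrt k * (norm (g' y) + norm (g y)))" using ig ig' by auto
      fix y
      have "norm ((g' y + g y) * E y) \<le> norm (g' y + g y) * sqrt k"
        unfolding norm_mult using nE[of y] by (intro mult_left_mono) auto
      also have "\<dots> \<le> (norm (g' y) + norm (g y)) * sqrt k"
        using k_pos by (intro mult_right_mono norm_triangle_ineq) auto
      finally show "norm ((g' y + g y) * E y) \<le> sqrt k * (norm (g' y) + norm (g y))" by (simp add: mult.commute)
    qed
    finally show "norm (LINT y|lborel. (g' y + g y) * E y) \<le> (LINT y|lborel. sqrt k * (norm (g' y) + norm (g y)))" .
  qed
  also have "\<dots> = B + sqrt k * (B + A)"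
    using ig ig' by (simp add: nA nB Bochner_Integration.integral_add)
  finally have kI: "k * norm I \<le> B + sqrt k * (B + A)" .
  have A0: "0 \<le> A" unfolding A_def by (rule integral_nonneg_AE) auto
  have B0: "0 \<le> B" unfolding B_def by (rule integral_nonneg_AE) auto
  define r where "r = sqrt k"
  have r0: "r > 0" using k_pos by (simp add: r_def)
  have kr: "k = r * r" using k_pos by (simp add: r_def)
  have "norm I \<le> (1 / r + 1 / k) * (A + B)"
  proof -
    have "k * norm I \<le> k * ((1 / r + 1 / k) * (A + B))"
    proof -
      have "k * ((1 / r + 1 / k) * (A + B)) = r * (A + B) + (A + B)"
        using r0 unfolding kr by (simp add: field_simps)
      then show ?thesis using kI A0 unfolding r_def[symmetric] by (simp add: algebra_simps)
    qed
    then show ?thesis using k_pos by simp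
  qed
  then show ?thesis unfolding I_def g_def c_def t_def A_def B_def r_def .
qed

end
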